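(* For every directed forest $\mathcal{T}=(V,\mathsf{p})$ there exists a greatest element (with respect to the relation "thinner than") in the set of all leafless directed forests with vertex set $V$ that are thinner than $\mathcal{T}$.
   Context: A directed forest is a pair $\mathcal{T}=(V,\mathsf{p})$ where $V$ is a nonempty set and $\mathsf{p}\colon V\to V$ satisfies: if $n\in\mathbb{N}$, $v\in V$ and $\mathsf{p}^n(v)=v$, then $\mathsf{p}(v)=v$. A leaf is an element of $V\setminus\mathsf{p}(V)$; the forest is leafless if $\mathsf{p}(V)=V$. For directed forests $\mathcal{T}_1=(V,\mathsf{p}_1)$, $\mathcal{T}_2=(V,\mathsf{p}_2)$, $\mathcal{T}_1$ is thinner than $\mathcal{T}_2$ if $\mathsf{p}_1(v)\in\{v,\mathsf{p}_2(v)\}$ for every $v\in V$; this is a partial order. *)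

theory Defs
  imports Main
begin

definition directed_forest :: "'a set \<Rightarrow> ('a \<Rightarrow> 'a) \<Rightarrow> bool" where
  "directed_forest V p \<longleftrightarrow> V \<noteq> {} \<and> p ` V \<subseteq> V \<and>
     (\<forall>n::nat. \<forall>v\<in>V. n \<ge> 1 \<longrightarrow> (p ^^ n) v = v \<longrightarrow> p v = v)"

definition leaves :: "'a set \<Rightarrow> ('a \<Rightarrow> 'a) \<Rightarrow> 'a set" where
  "leaves V p = V - p ` V"

definition leafless :: "'a set \<Rightarrow> ('a \<Rightarrow> 'a) \<Rightarrow> bool" where
  "leafless V p \<longleftrightarrow> p ` V = V"

definition thinner :: "'a set \<Rightarrow> ('a \<Rightarrow> 'a) \<Rightarrow> ('a \<Rightarrow> 'a) \<Rightarrow> bool" where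
  "thinner V p1 p2 \<longleftrightarrow> (\<forall>v\<in>V. p1 v \<in> {v, p2 v})"

end

theory Submission
  imports Defs
begin

lemma thin_pow:
  assumes "thinner V r p" "p ` V \<subseteq> V"
  shows "\<forall>v\<in>V. \<exists>k. (r ^^ n) v = (p ^^ k) v"
proof (induction n)
  case 0
  then show ?case by (metis funpow_0)
next
  case (Suc n)
  show ?case
  proof
    fix v assume v: "v \<in> V"
    have rv: "r v = v \<or> r v = p v" using assms(1) v unfolding thinner_def by fastforce
    have "r v \<in> V" using rv v assms(2) by auto
    then obtain k where k: "(r ^^ n) (r v) = (p ^^ k) (r v)" using Suc by blast
    show "\<exists>k. (r ^^ Suc n) v = (p ^^ k) v"
    proof (cases "r v = v")
      case True
      then show ?thesis using k by (metis comp_apply funpow_Suc_right)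
    next
      case False
      then have "r v = p v" using rv by auto
      then have "(r ^^ Suc n) v = (p ^^ Suc k) v" using k
        by (simp add: funpow_Suc_right del: funpow.simps)
      then show ?thesis by blast
    qed
  qed
qed

lemma thin_forest:
  assumes f: "directed_forest V p" and t: "thinner V r p"
  shows "directed_forest V r"
proof -
  have pV: "p ` V \<subseteq> V" and ne: "V \<noteq> {}" using f unfolding directed_forest_def by auto
  have rV: "r ` V \<subseteq> V" using t pV unfolding thinner_def by fastforce
  have "\<forall>n::nat. \<forall>v\<in>V. n \<ge> 1 \<longrightarrow> (r ^^ n) v = v \<longrightarrow> r v = v"
  proof (intro allI ballI impI)
    fix n :: nat and v assume v: "v \<in> V" and n: "n \<ge> 1" and c: "(r ^^ n) v = v"
    show "r v = v"
    proof (rule ccontr)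
      assume ne2: "r v \<noteq> v"
      then have rp: "r v = p v" using t v unfolding thinner_def by fastforce
      obtain m where m: "n = Suc m" using n by (cases n) auto
      have "r v \<in> V" using rV v by auto
      then obtain k where k: "(r ^^ m) (r v) = (p ^^ k) (r v)" using thin_pow[OF t pV] by blast
      have "(p ^^ Suc k) v = v" using c k rp m
        by (simp add: funpow_Suc_right del: funpow.simps)
      then have "p v = v" using f v unfolding directed_forest_def by (metis le_add1 plus_1_eq_Suc)
      then show False using ne2 rp by simp
    qed
  qed
  then show ?thesis using ne rV unfolding directed_forest_def by auto
qed

theorem theorem4p3:
  fixes V :: "'a set" and p :: "'a \<Rightarrow> 'a"
  assumes "directed_forest V p"
  shows "\<exists>q. (directed_forest V q \<and> leafless V q \<and> thinner V q p) \<and>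
           (\<forall>r. directed_forest V r \<and> leafless V r \<and> thinner V r p \<longrightarrow> thinner V r q)"
proof -
  define S where "S = {v\<in>V. \<exists>r. leafless V r \<and> thinner V r p \<and> r v \<noteq> v}"
  define q where "q = (\<lambda>v. if v \<in> S then p v else v)"
  have tq: "thinner V q p" unfolding thinner_def q_def by auto
  have pV: "p ` V \<subseteq> V" using assms unfolding directed_forest_def by auto
  have qV: "q ` V \<subseteq> V" using tq pV unfolding thinner_def by fastforce
  have "V \<subseteq> q ` V"
  proof
    fix v assume v: "v \<in> V"
    show "v \<in> q ` V"
    proof (cases "q v = v")
      case True then show ?thesis using v by (metis image_eqI)
    next
      case False
      then have vS: "v \<in> S" and pv: "p v \<noteq> v" unfolding q_def by (auto split: if_splits)
      then obtain r where r: "leafless V r" "thinner V r p" "r v \<noteq> v" unfolding S_def by auto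
      have rv: "r v = p v" using r v unfolding thinner_def by fastforce
      obtain w where w: "w \<in> V" "r w = v" using r(1) v unfolding leafless_def by (metis imageE)
      have "w \<noteq> v" using w rv pv by auto
      then have "r w \<noteq> w" using w by auto
      then have "w \<in> S" "r w = p w" using r w unfolding S_def thinner_def by auto
      then have "q w = v" using w unfolding q_def by auto
      then show ?thesis using w by (metis image_eqI)
    qed
  qed
  then have lq: "leafless V q" using qV unfolding leafless_def by auto
  have "\<forall>r. directed_forest V r \<and> leafless V r \<and> thinner V r p \<longrightarrow> thinner V r q"
    unfolding thinner_def
  proof (intro allI impI ballI)
    fix r v assume h: "directed_forest V r \<and> leafless V r \<and> (\<forall>v\<in>V. r v \<in> {v, p v})" and v: "v \<in> V"
    show "r v \<in> {v, q v}"
    proof (cases "r v = v")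
      case False
      then have "v \<in> S" using h v unfolding S_def thinner_def by auto
      then show ?thesis using h v unfolding q_def by auto
    qed simp
  qed
  then show ?thesis using thin_forest[OF assms tq] lq tq by blast
qed

end
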